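(* Let $r_0>0$, let $q\colon\mathbb{R}\to[0,+\infty)$ be continuous with $\limsup_{|y|\to+\infty}q(y)/|y|<1$, and let $D_q:=\{z\in\mathbb{C}:-q(\mathrm{Im}\,z)<\mathrm{Re}\,z<q(\mathrm{Im}\,z)\}$. Let $\mu_0$ be a positive Borel measure on $\mathbb{C}$ with support contained in the closure of $D_q$, and set $\mu_0^i(y):=\mu_0(\{z:|\mathrm{Im}\,z|\le y\})$ for $y\ge0$; assume there is a constant $C$ with $\mu_0^i(y)\le Cy$ for all $y\ge0$. Put $Q(y):=q(y)+q(-y)$, $y\ge0$. Then there is $C_0\ge0$ such that for all $r_0\le r<R<+\infty$ $$l^{\mathrm{rh}}_{\mu_0}(r,R)\le\int_r^R\frac{Q(y)}{y^2}\,d\mu_0^i(y)+C_0.$$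
   Context: $l^{\mathrm{rh}}_{\mu_0}(r,R):=\int_{r<|z|\le R,\ \mathrm{Re}\,z>0}\mathrm{Re}\frac1z\,d\mu_0(z)$. The Stieltjes integral $\int_r^R\dots d\mu_0^i$ is taken over the interval $(r,R]$. *)

theory Defs
  imports "HOL-Analysis.Analysis"
begin

definition Dq :: "(real \<Rightarrow> real) \<Rightarrow> complex set" where
  "Dq q = {z. - q (Im z) < Re z \<and> Re z < q (Im z)}"

definition mu_i :: "complex measure \<Rightarrow> real \<Rightarrow> real" where
  "mu_i M y = measure M {z. \<bar>Im z\<bar> \<le> y}"

definition l_rh :: "complex measure \<Rightarrow> real \<Rightarrow> real \<Rightarrow> real" where
  "l_rh M r R = (LINT z : {z. r < cmod z \<and> cmod z \<le> R \<and> Re z > 0} | M. Re (1 / z))"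

definition stieltjes_Ioc :: "complex measure \<Rightarrow> (real \<Rightarrow> real) \<Rightarrow> real \<Rightarrow> real \<Rightarrow> real" where
  "stieltjes_Ioc M f r R = (LINT y : {r<..R} | interval_measure (mu_i M). f y)"

end

theory Submission imports Defs begin

lemma imset_sets: "{z::complex. \<bar>Im z\<bar> \<le> y} \<in> sets borel"
  by measurable

lemma setup_facts:
  fixes M :: "complex measure" and C :: real
  assumes M_borel: "sets M = sets borel"
    and M_lin: "\<And>y. y \<ge> 0 \<Longrightarrow> emeasure M {z. \<bar>Im z\<bar> \<le> y} \<le> ennreal (C * y)"
  shows fin_im: "\<And>y. emeasure M {z. \<bar>Im z\<bar> \<le> y} \<noteq> \<infinity>"
    and sets_im: "\<And>y. {z. \<bar>Im z\<bar> \<le> y} \<in> sets M"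
proof -
  show S: "\<And>y. {z. \<bar>Im z\<bar> \<le> y} \<in> sets M" using M_borel imset_sets by simp
  fix y :: real
  show "emeasure M {z. \<bar>Im z\<bar> \<le> y} \<noteq> \<infinity>"
  proof (cases "y \<ge> 0")
    case True then show ?thesis using M_lin[OF True]
      by (metis ennreal_less_top infinity_ennreal_def linorder_not_le top.extremum_uniqueI)
  next
    case False
    then have "{z. \<bar>Im z\<bar> \<le> y} = {}" by auto
    then show ?thesis by simp
  qed
qed

lemma mono_mu:
  assumes S: "\<And>y. {z. \<bar>Im z\<bar> \<le> y} \<in> sets M" and fin: "\<And>y. emeasure M {z. \<bar>Im z\<bar> \<le> y} \<noteq> \<infinity>"
  shows "x \<le> y \<Longrightarrow> mu_i M x \<le> mu_i M y"
  unfolding mu_i_def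
  using fin[of y] by (intro measure_mono_fmeasurable) (auto simp: fmeasurable_def S less_top)

lemma rc_mu:
  assumes S: "\<And>y. {z. \<bar>Im z\<bar> \<le> y} \<in> sets M" and fin: "\<And>y. emeasure M {z. \<bar>Im z\<bar> \<le> y} \<noteq> \<infinity>"
  shows "continuous (at_right a) (mu_i M)"
  unfolding continuous_within
proof (rule tendsto_at_right_sequentially[where b="a + 1"])
  fix f :: "nat \<Rightarrow> real" assume f: "decseq f" "f \<longlonglongrightarrow> a"
  then have "(\<lambda>n. mu_i M (f n)) \<longlonglongrightarrow> measure M (\<Inter>i. {z. \<bar>Im z\<bar> \<le> f i})"
    unfolding mu_i_def
    by (intro Lim_measure_decseq) (use fin in \<open>auto simp: decseq_def S intro: order_trans\<close>)
  also have "(\<Inter>i. {z. \<bar>Im z\<bar> \<le> f i}) = {z. \<bar>Im z\<bar> \<le> a}"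
    using decseq_ge[OF f] by (auto intro: order_trans LIMSEQ_le_const[OF f(2)])
  finally show "(\<lambda>n. mu_i M (f n)) \<longlonglongrightarrow> mu_i M a"
    by (simp add: mu_i_def)
qed simp

lemma distr_eq:
  assumes M_borel: "sets M = sets borel"
  assumes S: "\<And>y. {z. \<bar>Im z\<bar> \<le> y} \<in> sets M" and fin: "\<And>y. emeasure M {z. \<bar>Im z\<bar> \<le> y} \<noteq> \<infinity>"
  shows "distr M borel (\<lambda>z. \<bar>Im z\<bar>) = interval_measure (mu_i M)"
proof (rule measure_eqI_generator_eq[where \<Omega>=UNIV and E="range (\<lambda>(a, b). {a<..b::real})" and A="\<lambda>i. {- real (i::nat)<..real i}"])
  have meas: "(\<lambda>z. \<bar>Im z\<bar>) \<in> measurable M borel"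
    using M_borel by (simp add: measurable_cong_sets[OF M_borel refl])
  fix X assume "X \<in> range (\<lambda>(a, b). {a<..b::real})"
  then obtain a b where Xeq: "X = {a<..b}" by auto
  have sp: "space M = UNIV" using M_borel sets_eq_imp_space_eq by fastforce
  have pre: "(\<lambda>z. \<bar>Im z\<bar>) -` {a<..b} \<inter> space M = {z. \<bar>Im z\<bar> \<le> b} - {z. \<bar>Im z\<bar> \<le> a}"
    using sp by auto
  show "emeasure (distr M borel (\<lambda>z. \<bar>Im z\<bar>)) X = emeasure (interval_measure (mu_i M)) X"
  proof (cases "a \<le> b")
    case True
    have "emeasure (distr M borel (\<lambda>z. \<bar>Im z\<bar>)) X = emeasure M ({z. \<bar>Im z\<bar> \<le> b} - {z. \<bar>Im z\<bar> \<le> a})"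
      unfolding Xeq by (subst emeasure_distr[OF meas]) (auto simp: pre)
    also have "\<dots> = ennreal (measure M ({z. \<bar>Im z\<bar> \<le> b} - {z. \<bar>Im z\<bar> \<le> a}))"
      using fin[of b] S by (intro emeasure_eq_ennreal_measure) (metis (no_types, lifting) Diff_subset emeasure_mono infinity_ennreal_def neq_top_trans sets.Diff)
    also have "\<dots> = ennreal (mu_i M b - mu_i M a)"
      unfolding mu_i_def using True fin S by (subst measure_Diff) auto
    also have "\<dots> = emeasure (interval_measure (mu_i M)) X"
      unfolding Xeq using True
      by (subst emeasure_interval_measure_Ioc) (auto intro: mono_mu[OF S fin] rc_mu[OF S fin])
    finally show ?thesis .
  next
    case False
    then have "X = {}" using Xeq by auto
    then show ?thesis by simp
  qed
next
  show "(\<Union>i. {- real (i::nat)<..real i}) = UNIV"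
    by (auto, metis minus_less_iff reals_Archimedean2 abs_less_iff le_less_trans abs_ge_self less_imp_le)
next
  fix i :: nat
  have meas: "(\<lambda>z. \<bar>Im z\<bar>) \<in> measurable M borel"
    using M_borel by (simp add: measurable_cong_sets[OF M_borel refl])
  have sp: "space M = UNIV" using M_borel sets_eq_imp_space_eq by fastforce
  have "emeasure (distr M borel (\<lambda>z. \<bar>Im z\<bar>)) {- real i<..real i} \<le> emeasure M {z. \<bar>Im z\<bar> \<le> real i}"
    by (subst emeasure_distr[OF meas]) (auto simp: sp intro!: emeasure_mono S)
  then show "emeasure (distr M borel (\<lambda>z. \<bar>Im z\<bar>)) {- real i<..real i} \<noteq> \<infinity>"
    using fin[of "real i"] by (metis infinity_ennreal_def neq_top_trans)
qed (auto simp: borel_sigma_sets_Ioc Int_stable_def)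


lemma pointwise:
  fixes q :: "real \<Rightarrow> real" and z :: complex
  assumes qn: "\<And>y. q y \<ge> 0" and hz: "Re z \<le> q (Im z)" and r: "r > 0"
  shows "indicator {z. r < cmod z \<and> cmod z \<le> R \<and> Re z > 0} z * Re (1 / z)
     \<le> indicator {z. \<bar>Im z\<bar> \<le> r} z * (1 / r)
        + indicator {z. r < \<bar>Im z\<bar> \<and> \<bar>Im z\<bar> \<le> R} z * ((q \<bar>Im z\<bar> + q (- \<bar>Im z\<bar>)) / \<bar>Im z\<bar>\<^sup>2)"
proof -
  have h0: "0 \<le> (q y + q (- y)) / y\<^sup>2" for y using qn[of y] qn[of "-y"] by simp
  have re: "Re (1 / z) = Re z / (cmod z)\<^sup>2"
    by (simp add: Re_divide cmod_power2)
  show ?thesis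
  proof (cases "r < cmod z \<and> cmod z \<le> R \<and> Re z > 0")
    case False
    have "0 \<le> (q \<bar>Im z\<bar> + q (- \<bar>Im z\<bar>)) / \<bar>Im z\<bar>\<^sup>2" by (rule h0)
    moreover have "indicator {z. r < cmod z \<and> cmod z \<le> R \<and> Re z > 0} z = (0::real)"
      using False by (simp add: indicator_def)
    ultimately show ?thesis using r
      by (simp only: mult_zero_left) (intro add_nonneg_nonneg mult_nonneg_nonneg; simp)
  next
    case A: True
    have zpos: "cmod z > 0" using A r by linarith
    show ?thesis
    proof (cases "\<bar>Im z\<bar> \<le> r")
      case True
      have "Re z / (cmod z)\<^sup>2 \<le> cmod z / (cmod z)\<^sup>2"
        using zpos by (intro divide_right_mono) (auto simp: complex_Re_le_cmod)
      also have "\<dots> = 1 / cmod z" using zpos by (simp add: power2_eq_square)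
      also have "\<dots> \<le> 1 / r" using A r by (intro divide_left_mono) (auto, metis zpos mult_pos_pos)
      finally show ?thesis using A True re
        by (simp add: indicator_def h0)
    next
      case False
      have imle: "\<bar>Im z\<bar> \<le> cmod z" by (rule abs_Im_le_cmod)
      have B: "r < \<bar>Im z\<bar> \<and> \<bar>Im z\<bar> \<le> R" using False imle A by linarith
      have impos: "(Im z)\<^sup>2 > 0" using False r by auto
      have "Re z / (cmod z)\<^sup>2 \<le> q (Im z) / (cmod z)\<^sup>2"
        using hz by (intro divide_right_mono) auto
      also have "\<dots> \<le> q (Im z) / (Im z)\<^sup>2"
        using impos qn[of "Im z"] imle zpos
        by (intro divide_left_mono) (auto simp: abs_le_square_iff[symmetric])
      also have "\<dots> \<le> (q \<bar>Im z\<bar> + q (- \<bar>Im z\<bar>)) / \<bar>Im z\<bar>\<^sup>2"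
        unfolding power2_abs
      proof (rule divide_right_mono)
        show "q (Im z) \<le> q \<bar>Im z\<bar> + q (- \<bar>Im z\<bar>)"
          using qn[of "Im z"] qn[of "- Im z"] by (cases "Im z \<ge> 0") auto
      qed simp
      finally show ?thesis using A B False re
        by (simp add: indicator_def)
    qed
  qed
qed


theorem lemma3:
  fixes r0 :: real and q :: "real \<Rightarrow> real" and M :: "complex measure" and C :: real
  assumes r0_pos: "r0 > 0"
    and q_cont: "continuous_on UNIV q"
    and q_nonneg: "\<And>y. q y \<ge> 0"
    and q_growth: "Limsup at_infinity (\<lambda>y. ereal (q y / \<bar>y\<bar>)) < 1"
    and M_borel: "sets M = sets borel"
    and M_supp: "emeasure M (UNIV - closure (Dq q)) = 0"
    and M_lin: "\<And>y. y \<ge> 0 \<Longrightarrow> emeasure M {z. \<bar>Im z\<bar> \<le> y} \<le> ennreal (C * y)"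
  shows "\<exists>C0 \<ge> 0. \<forall>r R. r0 \<le> r \<and> r < R \<longrightarrow>
           l_rh M r R \<le> stieltjes_Ioc M (\<lambda>y. (q y + q (- y)) / y\<^sup>2) r R + C0"
proof -
  note fin = setup_facts(1)[OF M_borel M_lin]
  note S = setup_facts(2)[OF M_borel M_lin]
  have sp: "space M = UNIV" using M_borel sets_eq_imp_space_eq by fastforce
  have meas_cong: "borel_measurable M = borel_measurable borel"
    by (rule measurable_cong_sets[OF M_borel refl])
  have qm[measurable]: "q \<in> borel_measurable borel"
    by (rule borel_measurable_continuous_onI[OF q_cont])
  have DN: "distr M borel (\<lambda>z. \<bar>Im z\<bar>) = interval_measure (mu_i M)"
    by (rule distr_eq[OF M_borel S fin])
  have clos: "closure (Dq q) \<subseteq> {z. Re z \<le> q (Im z)}"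
  proof (rule closure_minimal)
    show "Dq q \<subseteq> {z. Re z \<le> q (Im z)}" unfolding Dq_def by auto
    show "closed {z. Re z \<le> q (Im z)}"
      by (intro closed_Collect_le continuous_intros continuous_on_compose2[OF q_cont]) auto
  qed
  have AEq: "AE z in M. Re z \<le> q (Im z)"
  proof (rule AE_I'[where N="UNIV - closure (Dq q)"])
    show "UNIV - closure (Dq q) \<in> null_sets M"
      using M_supp M_borel by (auto simp: null_sets_def)
    show "{x \<in> space M. \<not> Re x \<le> q (Im x)} \<subseteq> UNIV - closure (Dq q)" using clos by auto
  qed
  show ?thesis
  proof (intro exI[of _ "max C 0"] conjI allI impI)
    fix r R :: real assume rR: "r0 \<le> r \<and> r < R"
    then have r: "r > 0" using r0_pos by linarith
    define A where "A = {z::complex. r < cmod z \<and> cmod z \<le> R \<and> Re z > 0}"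
    define L where "L = {z::complex. \<bar>Im z\<bar> \<le> r}"
    define B where "B = {z::complex. r < \<bar>Im z\<bar> \<and> \<bar>Im z\<bar> \<le> R}"
    define h where "h = (\<lambda>y. (q y + q (- y)) / y\<^sup>2)"
    define BR where "BR = {z::complex. \<bar>Im z\<bar> \<le> R}"
    have [measurable]: "A \<in> sets borel" "L \<in> sets borel" "B \<in> sets borel" "BR \<in> sets borel"
      unfolding A_def L_def B_def BR_def by measurable
    have hm[measurable]: "h \<in> borel_measurable borel" unfolding h_def by measurable
    have BRfin: "emeasure M BR < \<infinity>" using fin[of R] by (simp add: BR_def less_top)
    have BRs: "BR \<in> sets M" using S by (simp add: BR_def)
    obtain K where K: "\<And>y. y \<in> {-R..R} \<Longrightarrow> \<bar>q y\<bar> \<le> K"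
      using compact_imp_bounded[OF compact_continuous_image[OF continuous_on_subset[OF q_cont] compact_Icc]]
      by (auto simp: bounded_iff) (metis atLeastAtMost_iff)
    have intBR: "integrable M (\<lambda>z. c * indicator BR z)" for c :: real
      using BRs BRfin by simp
    have int1: "integrable M (\<lambda>z. indicator A z * Re (1 / z))"
    proof (rule Bochner_Integration.integrable_bound[OF intBR[of "1 / r"]])
      show "(\<lambda>z. indicator A z * Re (1 / z)) \<in> borel_measurable M"
        unfolding meas_cong by measurable
      show "AE z in M. norm (indicator A z * Re (1 / z)) \<le> norm (1 / r * indicator BR z)"
      proof (rule AE_I2)
        fix z :: complex
        show "norm (indicator A z * Re (1 / z)) \<le> norm (1 / r * indicator BR z)"
        proof (cases "z \<in> A")
          case True
          then have z: "r < cmod z" "cmod z \<le> R" by (auto simp: A_def)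
          have "z \<in> BR" using z abs_Im_le_cmod[of z] by (auto simp: BR_def)
          have "\<bar>Re (1 / z)\<bar> \<le> cmod (1 / z)" by (rule abs_Re_le_cmod)
          also have "\<dots> = 1 / cmod z" by (simp add: norm_divide)
          also have "\<dots> \<le> 1 / r" using z r by (intro divide_left_mono) (auto, metis r z(1) mult_pos_pos less_trans)
          finally show ?thesis using True \<open>z \<in> BR\<close> r by simp
        qed simp
      qed
    qed
    have int2: "integrable M (\<lambda>z. indicator B z * h \<bar>Im z\<bar>)"
    proof (rule Bochner_Integration.integrable_bound[OF intBR[of "2 * K / r\<^sup>2"]])
      show "(\<lambda>z. indicator B z * h \<bar>Im z\<bar>) \<in> borel_measurable M"
        unfolding meas_cong by measurable
      show "AE z in M. norm (indicator B z * h \<bar>Im z\<bar>) \<le> norm (2 * K / r\<^sup>2 * indicator BR z)"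
      proof (rule AE_I2)
        fix z :: complex
        show "norm (indicator B z * h \<bar>Im z\<bar>) \<le> norm (2 * K / r\<^sup>2 * indicator BR z)"
        proof (cases "z \<in> B")
          case True
          then have z: "r < \<bar>Im z\<bar>" "\<bar>Im z\<bar> \<le> R" by (auto simp: B_def)
          have "z \<in> BR" using z by (auto simp: BR_def)
          have K1: "q \<bar>Im z\<bar> \<le> K" "q (- \<bar>Im z\<bar>) \<le> K"
            using K[of "\<bar>Im z\<bar>"] K[of "- \<bar>Im z\<bar>"] z r by auto
          have sq: "r\<^sup>2 \<le> \<bar>Im z\<bar>\<^sup>2" using z r by (intro power_mono) auto
          have "0 \<le> h \<bar>Im z\<bar>" using q_nonneg[of "\<bar>Im z\<bar>"] q_nonneg[of "- \<bar>Im z\<bar>"] by (simp add: h_def)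
          moreover have "h \<bar>Im z\<bar> \<le> 2 * K / \<bar>Im z\<bar>\<^sup>2"
            unfolding h_def using K1 z r by (intro divide_right_mono) auto
          moreover have "2 * K / \<bar>Im z\<bar>\<^sup>2 \<le> 2 * K / r\<^sup>2"
            using K1 q_nonneg[of "\<bar>Im z\<bar>"] sq r by (intro divide_left_mono) (auto, smt (verit) mult_pos_pos zero_less_power)
          ultimately show ?thesis using True \<open>z \<in> BR\<close> by (simp, smt (verit) abs_ge_self divide_right_mono zero_le_power2)
        qed simp
      qed
    qed
    have intL: "integrable M (\<lambda>z. indicator L z * (1 / r))"
      using S[of r] fin[of r] by (simp add: L_def less_top)
    have "l_rh M r R = (\<integral>z. indicator A z * Re (1 / z) \<partial>M)"
      unfolding l_rh_def set_lebesgue_integral_def A_def by simp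
    also have "\<dots> \<le> (\<integral>z. indicator L z * (1 / r) + indicator B z * h \<bar>Im z\<bar> \<partial>M)"
    proof (rule integral_mono_AE[OF int1 Bochner_Integration.integrable_add[OF intL int2]])
      show "AE z in M. indicator A z * Re (1 / z) \<le> indicator L z * (1 / r) + indicator B z * h \<bar>Im z\<bar>"
        using AEq by eventually_elim (use pointwise[OF q_nonneg _ r] in \<open>simp add: A_def L_def B_def h_def\<close>)
    qed
    also have "\<dots> = (\<integral>z. indicator L z * (1 / r) \<partial>M) + (\<integral>z. indicator B z * h \<bar>Im z\<bar> \<partial>M)"
      by (rule Bochner_Integration.integral_add[OF intL int2])
    also have "(\<integral>z. indicator L z * (1 / r) \<partial>M) \<le> max C 0"
    proof -
      have eq: "(\<integral>z. indicator L z * (1 / r) \<partial>M) = measure M L / r"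
        using S[of r] fin[of r] by (simp add: L_def less_top)
      have "measure M L \<le> max C 0 * r"
      proof (cases "C \<ge> 0")
        case True
        have "emeasure M L \<le> ennreal (C * r)" using M_lin[of r] r by (simp add: L_def)
        then have "measure M L \<le> C * r"
          using True r by (simp add: measure_def enn2real_leI)
        then show ?thesis using True by simp
      next
        case False
        have "emeasure M L \<le> 0" using M_lin[of r] r False
          by (simp add: L_def ennreal_eq_0_iff mult_nonpos_nonneg ennreal_neg)
        then show ?thesis using r by (simp add: measure_def)
      qed
      then show ?thesis unfolding eq using r by (simp add: divide_le_eq)
    qed
    also have "(\<integral>z. indicator B z * h \<bar>Im z\<bar> \<partial>M) = stieltjes_Ioc M (\<lambda>y. (q y + q (- y)) / y\<^sup>2) r R"
    proof -
      have "stieltjes_Ioc M (\<lambda>y. (q y + q (- y)) / y\<^sup>2) r R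
          = (\<integral>y. indicator {r<..R} y * h y \<partial>(distr M borel (\<lambda>z. \<bar>Im z\<bar>)))"
        unfolding stieltjes_Ioc_def set_lebesgue_integral_def DN h_def by simp
      also have "\<dots> = (\<integral>z. indicator {r<..R} \<bar>Im z\<bar> * h \<bar>Im z\<bar> \<partial>M)"
        by (rule integral_distr) (auto simp: meas_cong)
      also have "\<dots> = (\<integral>z. indicator B z * h \<bar>Im z\<bar> \<partial>M)"
        by (rule Bochner_Integration.integral_cong) (auto simp: B_def indicator_def)
      finally show ?thesis by simp
    qed
    finally show "l_rh M r R \<le> stieltjes_Ioc M (\<lambda>y. (q y + q (- y)) / y\<^sup>2) r R + max C 0"
      by simp
  qed simp
qed

end
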